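(* Let $X=\{x,y,z\}$ and $U=\{u,v,w\}$ be distinct three-element subsets of $\Sigma^+$ such that $X^*$ and $U^*$ are $3$-maximal, $Z=X\cup U$, and let $g,h:A^*\to\Sigma^*$ (with $A=\{\mathbf a,\mathbf b,\mathbf c\}$) be the morphisms $g(\mathbf a)=x,g(\mathbf b)=y,g(\mathbf c)=z$, $h(\mathbf a)=u,h(\mathbf b)=v,h(\mathbf c)=w$. Assume that $g$ is $Z$-marked. If $(\mathbf r,\mathbf s)$ and $(\mathbf r',\mathbf s')$ are two distinct minimal solutions of $C(g,h)$, then, with $\mathbf u=\mathbf r\wedge\mathbf r'$ and $\mathbf v=\mathbf s\wedge\mathbf s'$, there is a word $o$ with $g(\mathbf u)=h(\mathbf v)o$ which is a critical overflow on $(\mathbf u,\mathbf v)$. Moreover, $h$ is $Z$-marked if and only if $o$ is the empty word.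
   Context: $\Sigma^*$ is the free monoid over a countable alphabet $\Sigma$. A submonoid of rank (cardinality of minimal generating set) at most $k$ is $k$-maximal if it is not properly contained in any submonoid of $\Sigma^*$ of rank at most $k$. $\mathbf p\wedge\mathbf q$ denotes the longest common prefix of two words. The free hull of $Z$ is the smallest free submonoid of $\Sigma^*$ containing $Z$, with basis $\mathrm{FB}(Z)$; for $w$ in it, $w=b_1\cdots b_n$ uniquely with $b_i\in\mathrm{FB}(Z)$ and $\mathrm{first}_Z(w)=b_1$. A morphism $f:A^*\to\Sigma^*$ with images in the free hull is $Z$-marked if $\mathrm{first}_Z(f(\mathbf a_1))\neq\mathrm{first}_Z(f(\mathbf a_2))$ for distinct letters $\mathbf a_1,\mathbf a_2$. $C(g,h)=\{(\mathbf r,\mathbf s)\in A^+\times A^+: g(\mathbf r)=h(\mathbf s)\}$; a solution $(\mathbf r,\mathbf s)$ is minimal if there is no solution $(\mathbf p,\mathbf q)$ with $\mathbf p$ a proper prefix of $\mathbf r$ and $\mathbf q$ a proper prefix of $\mathbf s$. For a word $\mathbf t$, $\mathrm{first}(\mathbf t)$ is its first letter. A word $o\in\Sigma^*$ is a critical overflow on $(\mathbf u,\mathbf v)\in A^*\times A^*$ if $g(\mathbf u)=h(\mathbf v)o$ and there exist $\mathbf u_1,\mathbf u_2,\mathbf v_1,\mathbf v_2\in A^*$ with $\mathrm{first}(\mathbf u_1)\neq\mathrm{first}(\mathbf u_2)$, $\mathrm{first}(\mathbf v_1)\neq\mathrm{first}(\mathbf v_2)$, $g(\mathbf u\mathbf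 u_1)=h(\mathbf v\mathbf v_1)$ and $g(\mathbf u\mathbf u_2)=h(\mathbf v\mathbf v_2)$. *)

theory Defs
  imports Main "HOL-Library.Sublist" "HOL-Library.Countable"
begin

definition monoid_gen :: "'a list set \<Rightarrow> 'a list set" where
  "monoid_gen G = {concat ws | ws. set ws \<subseteq> G}"

definition submonoid :: "'a list set \<Rightarrow> bool" where
  "submonoid M \<longleftrightarrow> [] \<in> M \<and> (\<forall>p\<in>M. \<forall>q\<in>M. p @ q \<in> M)"

definition rank_le :: "'a list set \<Rightarrow> nat \<Rightarrow> bool" where
  "rank_le M k \<longleftrightarrow> (\<exists>G. finite G \<and> card G \<le> k \<and> monoid_gen G = M)"

definition k_maximal :: "nat \<Rightarrow> 'a list set \<Rightarrow> bool" where
  "k_maximal k M \<longleftrightarrow> submonoid M \<and> rank_le M k \<and>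
     (\<forall>N. submonoid N \<and> rank_le N k \<and> M \<subseteq> N \<longrightarrow> N = M)"

definition is_code :: "'a list set \<Rightarrow> bool" where
  "is_code B \<longleftrightarrow> [] \<notin> B \<and>
     (\<forall>ws1 ws2. set ws1 \<subseteq> B \<longrightarrow> set ws2 \<subseteq> B \<longrightarrow> concat ws1 = concat ws2 \<longrightarrow> ws1 = ws2)"

definition free_submonoid :: "'a list set \<Rightarrow> bool" where
  "free_submonoid M \<longleftrightarrow> (\<exists>B. is_code B \<and> M = monoid_gen B)"

definition free_hull :: "'a list set \<Rightarrow> 'a list set" where
  "free_hull Z = \<Inter>{M. free_submonoid M \<and> Z \<subseteq> M}"

text \<open>Basis of the free hull: its minimal generating set (irreducible elements).\<close>
definition FB :: "'a list set \<Rightarrow> 'a list set" where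
  "FB Z = {w \<in> free_hull Z. w \<noteq> [] \<and>
     \<not> (\<exists>p q. p \<in> free_hull Z \<and> q \<in> free_hull Z \<and> p \<noteq> [] \<and> q \<noteq> [] \<and> w = p @ q)}"

definition first_Z :: "'a list set \<Rightarrow> 'a list \<Rightarrow> 'a list" where
  "first_Z Z w = (THE b. b \<in> FB Z \<and> (\<exists>ws. set ws \<subseteq> FB Z \<and> w = concat (b # ws)))"

datatype letter = La | Lb | Lc

definition morph :: "('b \<Rightarrow> 'a list) \<Rightarrow> 'b list \<Rightarrow> 'a list" where
  "morph f w = concat (map f w)"

definition Z_marked :: "'a list set \<Rightarrow> ('b \<Rightarrow> 'a list) \<Rightarrow> bool" where
  "Z_marked Z f \<longleftrightarrow> (\<forall>l. f l \<in> free_hull Z) \<and>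
     (\<forall>l1 l2. l1 \<noteq> l2 \<longrightarrow> first_Z Z (f l1) \<noteq> first_Z Z (f l2))"

definition C_sol :: "('b \<Rightarrow> 'a list) \<Rightarrow> ('b \<Rightarrow> 'a list) \<Rightarrow> ('b list \<times> 'b list) set" where
  "C_sol g h = {(r, s). r \<noteq> [] \<and> s \<noteq> [] \<and> morph g r = morph h s}"

definition minimal_sol :: "('b \<Rightarrow> 'a list) \<Rightarrow> ('b \<Rightarrow> 'a list) \<Rightarrow> 'b list \<Rightarrow> 'b list \<Rightarrow> bool" where
  "minimal_sol g h r s \<longleftrightarrow> (r, s) \<in> C_sol g h \<and>
     \<not> (\<exists>p q. (p, q) \<in> C_sol g h \<and> strict_prefix p r \<and> strict_prefix q s)"

definition first :: "'b list \<Rightarrow> 'b option" where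
  "first t = (if t = [] then None else Some (hd t))"

definition critical_overflow ::
  "('b \<Rightarrow> 'a list) \<Rightarrow> ('b \<Rightarrow> 'a list) \<Rightarrow> 'b list \<Rightarrow> 'b list \<Rightarrow> 'a list \<Rightarrow> bool" where
  "critical_overflow g h u v ov \<longleftrightarrow> morph g u = morph h v @ ov \<and>
     (\<exists>u1 u2 v1 v2. first u1 \<noteq> first u2 \<and> first v1 \<noteq> first v2 \<and>
        morph g (u @ u1) = morph h (v @ v1) \<and> morph g (u @ u2) = morph h (v @ v2))"

end

theory Submission
  imports Defs
begin


definition mstable :: "'a list set \<Rightarrow> bool" where
  "mstable M \<longleftrightarrow> (\<forall>p q w. p \<in> M \<longrightarrow> q \<in> M \<longrightarrow> p @ w \<in> M \<longrightarrow> w @ q \<in> M \<longrightarrow> w \<in> M)"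

lemma mstableD: "mstable M \<Longrightarrow> p \<in> M \<Longrightarrow> q \<in> M \<Longrightarrow> p @ w \<in> M \<Longrightarrow> w @ q \<in> M \<Longrightarrow> w \<in> M"
  unfolding mstable_def by blast

definition irr :: "'a list set \<Rightarrow> 'a list set" where
  "irr M = {w \<in> M. w \<noteq> [] \<and> \<not> (\<exists>p q. p \<in> M \<and> q \<in> M \<and> p \<noteq> [] \<and> q \<noteq> [] \<and> w = p @ q)}"

lemma FB_irr: "FB Z = irr (free_hull Z)" by (simp add: FB_def irr_def)

lemma monoid_gen_mem: "w \<in> monoid_gen G \<longleftrightarrow> (\<exists>ws. set ws \<subseteq> G \<and> w = concat ws)"
  unfolding monoid_gen_def by auto

lemma monoid_gen_submonoid: "submonoid (monoid_gen G)"
proof -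
  have "[] \<in> monoid_gen G" unfolding monoid_gen_mem by (auto intro!: exI[of _ "[]"])
  moreover have "p @ q \<in> monoid_gen G" if "p \<in> monoid_gen G" "q \<in> monoid_gen G" for p q
  proof -
    from that obtain ws1 ws2 where "set ws1 \<subseteq> G" "p = concat ws1" "set ws2 \<subseteq> G" "q = concat ws2"
      unfolding monoid_gen_mem by blast
    then show ?thesis unfolding monoid_gen_mem by (auto intro!: exI[of _ "ws1 @ ws2"])
  qed
  ultimately show ?thesis unfolding submonoid_def by blast
qed

lemma gen_in: "g \<in> G \<Longrightarrow> g \<in> monoid_gen G"
  unfolding monoid_gen_mem by (auto intro!: exI[of _ "[g]"])

lemma submonoid_concat: "submonoid M \<Longrightarrow> set ws \<subseteq> M \<Longrightarrow> concat ws \<in> M"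
  by (induction ws) (auto simp: submonoid_def)

lemma monoid_gen_least: "submonoid M \<Longrightarrow> G \<subseteq> M \<Longrightarrow> monoid_gen G \<subseteq> M"
  using submonoid_concat[of M] unfolding monoid_gen_def by blast

lemma code_unique: "is_code B \<Longrightarrow> set ws1 \<subseteq> B \<Longrightarrow> set ws2 \<subseteq> B \<Longrightarrow> concat ws1 = concat ws2 \<Longrightarrow> ws1 = ws2"
  unfolding is_code_def by blast

lemma code_nonempty: "is_code B \<Longrightarrow> b \<in> B \<Longrightarrow> b \<noteq> []"
  unfolding is_code_def by blast

lemma free_sub: "free_submonoid M \<Longrightarrow> submonoid M"
  unfolding free_submonoid_def using monoid_gen_submonoid by blast

lemma free_stable: "free_submonoid M \<Longrightarrow> mstable M"
proof -
  assume "free_submonoid M"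
  then obtain B where cB: "is_code B" and MB: "M = monoid_gen B" unfolding free_submonoid_def by blast
  show ?thesis unfolding mstable_def
  proof (intro allI impI)
    fix p q w assume "p \<in> M" "q \<in> M" "p @ w \<in> M" "w @ q \<in> M"
    then obtain P Q PW WQ where P: "set P \<subseteq> B" "p = concat P" and Q: "set Q \<subseteq> B" "q = concat Q"
      and PW: "set PW \<subseteq> B" "p @ w = concat PW" and WQ: "set WQ \<subseteq> B" "w @ q = concat WQ"
      unfolding MB monoid_gen_mem by metis
    have "concat (P @ WQ) = concat (PW @ Q)" using P Q PW WQ by (metis append_assoc concat_append)
    then have eq: "P @ WQ = PW @ Q" using code_unique[OF cB] P Q PW WQ by auto
    then obtain us where "(P = PW @ us \<and> us @ WQ = Q) \<or> (P @ us = PW \<and> WQ = us @ Q)"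
      by (auto simp: append_eq_append_conv2)
    then show "w \<in> M"
    proof
      assume "P = PW @ us \<and> us @ WQ = Q"
      then have "p = p @ w @ concat us" using P PW by simp
      then have "w = []" by (metis append_self_conv append_Nil2 append_assoc Nil_is_append_conv)
      then show ?thesis using free_sub[OF \<open>free_submonoid M\<close>] unfolding submonoid_def by simp
    next
      assume "P @ us = PW \<and> WQ = us @ Q"
      then have "p @ w = p @ concat us" using P PW by auto
      then have "w = concat us" by simp
      moreover have "set us \<subseteq> B" using PW \<open>P @ us = PW \<and> WQ = us @ Q\<close> by auto
      ultimately show ?thesis unfolding MB monoid_gen_mem by blast
    qed
  qed
qed

lemma irr_sub: "irr M \<subseteq> M" unfolding irr_def by auto

lemma irr_gen: assumes sm: "submonoid M" shows "monoid_gen (irr M) = M"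
proof
  show "monoid_gen (irr M) \<subseteq> M" using monoid_gen_least[OF sm irr_sub] .
  show "M \<subseteq> monoid_gen (irr M)"
  proof
    fix w assume "w \<in> M"
    then show "w \<in> monoid_gen (irr M)"
    proof (induction "length w" arbitrary: w rule: less_induct)
      case less
      show ?case
      proof (cases "w \<in> irr M")
        case True then show ?thesis by (rule gen_in)
      next
        case False
        then have "w = [] \<or> (\<exists>p q. p \<in> M \<and> q \<in> M \<and> p \<noteq> [] \<and> q \<noteq> [] \<and> w = p @ q)"
          using less.prems unfolding irr_def by auto
        then show ?thesis
        proof
          assume "w = []" thus ?thesis using monoid_gen_submonoid unfolding submonoid_def by blast
        next
          assume "\<exists>p q. p \<in> M \<and> q \<in> M \<and> p \<noteq> [] \<and> q \<noteq> [] \<and> w = p @ q"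
          then obtain p q where pq: "p \<in> M" "q \<in> M" "p \<noteq> []" "q \<noteq> []" "w = p @ q" by blast
          then have "p \<in> monoid_gen (irr M)" "q \<in> monoid_gen (irr M)" using less.hyps by auto
          then show ?thesis using monoid_gen_submonoid pq(5) unfolding submonoid_def by blast
        qed
      qed
    qed
  qed
qed

lemma irr_unique:
  assumes sm: "submonoid M" and st: "mstable M"
  shows "set ws1 \<subseteq> irr M \<Longrightarrow> set ws2 \<subseteq> irr M \<Longrightarrow> concat ws1 = concat ws2 \<Longrightarrow> ws1 = ws2"
proof (induction ws1 arbitrary: ws2)
  case Nil
  then have "\<forall>x\<in>set ws2. x = []" by simp
  moreover have "\<forall>x\<in>set ws2. x \<noteq> []" using Nil.prems(2) unfolding irr_def by auto
  ultimately show ?case by (metis list.set_intros(1) neq_Nil_conv)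
next
  case (Cons a t1)
  have a: "a \<in> irr M" using Cons.prems by auto
  then have "a \<noteq> []" unfolding irr_def by auto
  then have "ws2 \<noteq> []" using Cons.prems by auto
  then obtain b t2 where ws2: "ws2 = b # t2" by (cases ws2) auto
  have b: "b \<in> irr M" using Cons.prems ws2 by auto
  have t1M: "concat t1 \<in> M" using Cons.prems submonoid_concat[OF sm] irr_sub by fastforce
  have t2M: "concat t2 \<in> M" using Cons.prems ws2 submonoid_concat[OF sm] irr_sub by fastforce
  have eq: "a @ concat t1 = b @ concat t2" using Cons.prems ws2 by simp
  show ?case
  proof (cases "a = b")
    case True
    then have "concat t1 = concat t2" using eq by simp
    moreover have "set t1 \<subseteq> irr M" "set t2 \<subseteq> irr M" using Cons.prems ws2 by auto
    ultimately have "t1 = t2" using Cons.IH by blast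
    then show ?thesis using True ws2 by simp
  next
    case False
    from eq obtain us where "(a = b @ us \<and> us @ concat t1 = concat t2) \<or> (a @ us = b \<and> concat t1 = us @ concat t2)"
      by (auto simp: append_eq_append_conv2)
    then show ?thesis
    proof
      assume h: "a = b @ us \<and> us @ concat t1 = concat t2"
      have "us \<in> M" using mstableD[OF st, of b "concat t1" us] h a b t1M t2M irr_sub by auto
      moreover have "us \<noteq> []" using h False by auto
      moreover have "b \<noteq> []" "b \<in> M" using b unfolding irr_def by auto
      moreover have "\<not> (\<exists>p q. p \<in> M \<and> q \<in> M \<and> p \<noteq> [] \<and> q \<noteq> [] \<and> a = p @ q)"
        using a unfolding irr_def by blast
      ultimately show ?thesis using h by blast
    next
      assume h: "a @ us = b \<and> concat t1 = us @ concat t2"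
      have "us \<in> M" using mstableD[OF st, of a "concat t2" us] h a b t1M t2M irr_sub by auto
      moreover have "us \<noteq> []" using h False by auto
      moreover have "a \<noteq> []" "a \<in> M" using a unfolding irr_def by auto
      moreover have "\<not> (\<exists>p q. p \<in> M \<and> q \<in> M \<and> p \<noteq> [] \<and> q \<noteq> [] \<and> b = p @ q)"
        using b unfolding irr_def by blast
      ultimately show ?thesis using h by blast
    qed
  qed
qed

lemma irr_code: "submonoid M \<Longrightarrow> mstable M \<Longrightarrow> is_code (irr M)"
  unfolding is_code_def using irr_unique by (auto simp: irr_def)

lemma stable_free: "submonoid M \<Longrightarrow> mstable M \<Longrightarrow> free_submonoid M"
  unfolding free_submonoid_def using irr_code irr_gen by metis

lemma hull_submonoid: "submonoid (free_hull Z)"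
proof -
  have "[] \<in> free_hull Z" unfolding free_hull_def using free_sub unfolding submonoid_def by blast
  moreover have "p @ q \<in> free_hull Z" if "p \<in> free_hull Z" "q \<in> free_hull Z" for p q
  proof -
    have "p @ q \<in> M" if "free_submonoid M" "Z \<subseteq> M" for M
    proof -
      have "p \<in> M" "q \<in> M" using \<open>p \<in> free_hull Z\<close> \<open>q \<in> free_hull Z\<close> that unfolding free_hull_def by blast+
      then show ?thesis using free_sub[OF that(1)] unfolding submonoid_def by blast
    qed
    then show ?thesis unfolding free_hull_def by blast
  qed
  ultimately show ?thesis unfolding submonoid_def by blast
qed

lemma hull_stable: "mstable (free_hull Z)"
  unfolding mstable_def
proof (intro allI impI)
  fix p q w assume h: "p \<in> free_hull Z" "q \<in> free_hull Z" "p @ w \<in> free_hull Z" "w @ q \<in> free_hull Z"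
  have "w \<in> M" if "free_submonoid M" "Z \<subseteq> M" for M
  proof -
    have "p \<in> M" "q \<in> M" "p @ w \<in> M" "w @ q \<in> M" using h that unfolding free_hull_def by blast+
    then show ?thesis using mstableD[OF free_stable[OF that(1)]] by blast
  qed
  then show "w \<in> free_hull Z" unfolding free_hull_def by blast
qed

lemma hull_sup: "Z \<subseteq> free_hull Z"
  unfolding free_hull_def by blast

lemma hull_least: "free_submonoid M \<Longrightarrow> Z \<subseteq> M \<Longrightarrow> free_hull Z \<subseteq> M"
  unfolding free_hull_def by blast

lemma FB_code: "is_code (FB Z)"
  unfolding FB_irr using irr_code hull_submonoid hull_stable by blast

lemma FB_gen: "monoid_gen (FB Z) = free_hull Z"
  unfolding FB_irr using irr_gen hull_submonoid by blast

lemma hull_fact: "w \<in> free_hull Z \<Longrightarrow> \<exists>ws. set ws \<subseteq> FB Z \<and> concat ws = w"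
  using FB_gen[of Z] monoid_gen_mem[of w "FB Z"] by auto

lemma first_Z_concat:
  assumes "set ws \<subseteq> FB Z" "ws \<noteq> []"
  shows "first_Z Z (concat ws) = hd ws"
  unfolding first_Z_def
proof (rule the_equality)
  show "hd ws \<in> FB Z \<and> (\<exists>ws'. set ws' \<subseteq> FB Z \<and> concat ws = concat (hd ws # ws'))"
    using assms by (cases ws) auto
next
  fix b assume "b \<in> FB Z \<and> (\<exists>ws'. set ws' \<subseteq> FB Z \<and> concat ws = concat (b # ws'))"
  then obtain ws' where "b \<in> FB Z" "set ws' \<subseteq> FB Z" "concat ws = concat (b # ws')" by blast
  then have "ws = b # ws'" using code_unique[OF FB_code] assms by (metis insert_subset list.simps(15))
  then show "b = hd ws" by simp
qed

lemma FB_first_surj: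
  assumes nZ: "[] \<notin> Z" and b: "b \<in> FB Z"
  shows "\<exists>z\<in>Z. first_Z Z z = b"
proof (rule ccontr)
  assume nz: "\<not> ?thesis"
  define M where "M = {concat ws | ws. set ws \<subseteq> FB Z \<and> (ws = [] \<or> hd ws \<noteq> b)}"
  have MH: "M \<subseteq> free_hull Z" unfolding M_def FB_gen[symmetric] monoid_gen_def by auto
  have sm: "submonoid M"
  proof -
    have "[] \<in> M" unfolding M_def by (auto intro!: exI[of _ "[]"])
    moreover have "p @ q \<in> M" if "p \<in> M" "q \<in> M" for p q
    proof -
      from that obtain ws1 ws2 where "set ws1 \<subseteq> FB Z" "ws1 = [] \<or> hd ws1 \<noteq> b" "p = concat ws1"
        "set ws2 \<subseteq> FB Z" "ws2 = [] \<or> hd ws2 \<noteq> b" "q = concat ws2" unfolding M_def by blast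
      moreover have "ws1 @ ws2 = [] \<or> hd (ws1 @ ws2) \<noteq> b"
        using \<open>ws1 = [] \<or> hd ws1 \<noteq> b\<close> \<open>ws2 = [] \<or> hd ws2 \<noteq> b\<close> by (cases ws1) auto
      moreover have "set (ws1 @ ws2) \<subseteq> FB Z" "p @ q = concat (ws1 @ ws2)"
        using \<open>set ws1 \<subseteq> FB Z\<close> \<open>set ws2 \<subseteq> FB Z\<close> \<open>p = concat ws1\<close> \<open>q = concat ws2\<close> by auto
      ultimately show ?thesis unfolding M_def by blast
    qed
    ultimately show ?thesis unfolding submonoid_def by blast
  qed
  have st: "mstable M" unfolding mstable_def
  proof (intro allI impI)
    fix p q w assume h: "p \<in> M" "q \<in> M" "p @ w \<in> M" "w @ q \<in> M"
    then have "w \<in> free_hull Z" using MH mstableD[OF hull_stable, of p Z q w] by blast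
    then obtain W where W: "set W \<subseteq> FB Z" "concat W = w" using hull_fact by blast
    obtain Q where Q: "set Q \<subseteq> FB Z" "q = concat Q" using h(2) unfolding M_def by blast
    obtain WQ where WQ: "set WQ \<subseteq> FB Z" "WQ = [] \<or> hd WQ \<noteq> b" "w @ q = concat WQ"
      using h(4) unfolding M_def by blast
    have "WQ = W @ Q" by (rule code_unique[OF FB_code]) (use W Q WQ in auto)
    then have "W = [] \<or> hd W \<noteq> b" using WQ(2) by (cases W) auto
    then show "w \<in> M" unfolding M_def using W by blast
  qed
  have "Z \<subseteq> M"
  proof
    fix z assume z: "z \<in> Z"
    then have "z \<in> free_hull Z" using hull_sup by blast
    then obtain ws where ws: "set ws \<subseteq> FB Z" "concat ws = z" using hull_fact by blast
    have "ws \<noteq> []" using ws nZ z by auto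
    then have "hd ws \<noteq> b" using first_Z_concat[OF ws(1)] ws(2) nz z by auto
    then show "z \<in> M" unfolding M_def using ws by blast
  qed
  then have "free_hull Z \<subseteq> M" using hull_least stable_free[OF sm st] by blast
  moreover have "b \<in> free_hull Z" using b irr_sub unfolding FB_irr by blast
  ultimately have "b \<in> M" by blast
  then obtain ws where ws: "set ws \<subseteq> FB Z" "ws = [] \<or> hd ws \<noteq> b" "b = concat ws" unfolding M_def by blast
  have "ws = [b]" by (rule code_unique[OF FB_code]) (use ws b in auto)
  then show False using ws(2) by simp
qed



definition mk :: "('l \<Rightarrow> 'b list) \<Rightarrow> bool" where
  "mk f \<longleftrightarrow> (\<forall>l. f l \<noteq> []) \<and> (\<forall>l1 l2. l1 \<noteq> l2 \<longrightarrow> hd (f l1) \<noteq> hd (f l2))"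

lemma ext_empty: "\<forall>l. f l \<noteq> [] \<Longrightarrow> concat (map f t) = [] \<Longrightarrow> t = []"
  by (cases t) auto

lemma ext_hd: "\<forall>l. f l \<noteq> [] \<Longrightarrow> t \<noteq> [] \<Longrightarrow> hd (concat (map f t)) = hd (f (hd t))"
  by (cases t) auto

lemma mk_inj: "mk f \<Longrightarrow> concat (map f t) = concat (map f t') \<Longrightarrow> t = t'"
proof (induction t arbitrary: t')
  case Nil
  then show ?case using ext_empty[of f t'] unfolding mk_def by auto
next
  case (Cons a t)
  have ne: "\<forall>l. f l \<noteq> []" using Cons.prems unfolding mk_def by auto
  have "t' \<noteq> []" using Cons.prems ne by auto
  then obtain b t'' where t': "t' = b # t''" by (cases t') auto
  have "hd (f a) = hd (f b)" using ext_hd[OF ne, of "a # t"] ext_hd[OF ne, of t'] Cons.prems t' by simp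
  then have "a = b" using Cons.prems unfolding mk_def by blast
  then show ?case using Cons t' by auto
qed

lemma prefix_split: "prefix xs ys \<Longrightarrow> ys = xs @ drop (length xs) ys"
  by (auto simp: prefix_def)

lemma lcp_self: "longest_common_prefix t t = t"
  by (induction t) auto

lemma lcp_diff_first:
  "t \<noteq> t' \<Longrightarrow> first (drop (length (longest_common_prefix t t')) t)
     \<noteq> first (drop (length (longest_common_prefix t t')) t')"
  by (induction t t' rule: longest_common_prefix.induct) (auto simp: first_def)

lemma first_app: "a \<noteq> [] \<Longrightarrow> first (a @ b) = first a"
  by (cases a) (auto simp: first_def)

lemma prefix_hd: "prefix us C \<Longrightarrow> us \<noteq> [] \<Longrightarrow> hd C = hd us"
  by (auto simp: prefix_def)

lemma bound:
  assumes m: "mk \<phi>" and e1: "concat (map \<phi> t) = concat (map \<psi> p)"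
    and e2: "concat (map \<phi> t') = concat (map \<psi> p')"
  shows "prefix (concat (map \<psi> (longest_common_prefix p p'))) (concat (map \<phi> (longest_common_prefix t t')))"
proof -
  define u where "u = longest_common_prefix t t'"
  define v where "v = longest_common_prefix p p'"
  define t1 where "t1 = drop (length u) t"
  define t2 where "t2 = drop (length u) t'"
  have tt: "t = u @ t1" "t' = u @ t2" unfolding t1_def t2_def u_def
    using prefix_split longest_common_prefix_prefix1 longest_common_prefix_prefix2 by blast+
  have pp: "p = v @ drop (length v) p" "p' = v @ drop (length v) p'" unfolding v_def
    using prefix_split longest_common_prefix_prefix1 longest_common_prefix_prefix2 by blast+
  have ne: "\<forall>l. \<phi> l \<noteq> []" using m unfolding mk_def by auto
  let ?X = "concat (map \<psi> v)" and ?A = "concat (map \<phi> u)"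
  have A: "prefix ?X (?A @ concat (map \<phi> t1))"
  proof -
    have "concat (map \<psi> p) = ?X @ concat (map \<psi> (drop (length v) p))" using pp(1)
      by (metis concat_append map_append)
    then show ?thesis using e1 tt(1) by (metis concat_append map_append prefixI)
  qed
  have B: "prefix ?X (?A @ concat (map \<phi> t2))"
  proof -
    have "concat (map \<psi> p') = ?X @ concat (map \<psi> (drop (length v) p'))" using pp(2)
      by (metis concat_append map_append)
    then show ?thesis using e2 tt(2) by (metis concat_append map_append prefixI)
  qed
  show ?thesis
  proof (cases "t = t'")
    case True
    then have "u = t" "t1 = []" unfolding u_def t1_def by (auto simp: lcp_self)
    then show ?thesis using A unfolding u_def v_def by simp
  next
    case False
    have fd: "first t1 \<noteq> first t2" using lcp_diff_first[OF False] unfolding t1_def t2_def u_def .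
    show ?thesis
    proof (rule ccontr)
      assume np: "\<not> ?thesis"
      then have np': "\<not> prefix ?X ?A" unfolding u_def v_def .
      from A np' obtain us1 where us1: "?X = ?A @ us1" "prefix us1 (concat (map \<phi> t1))"
        by (auto simp: prefix_append)
      from B np' obtain us2 where us2: "?X = ?A @ us2" "prefix us2 (concat (map \<phi> t2))"
        by (auto simp: prefix_append)
      have "us1 = us2" using us1 us2 by simp
      have "us1 \<noteq> []" using us1 np' by auto
      then have "concat (map \<phi> t1) \<noteq> []" "concat (map \<phi> t2) \<noteq> []"
        using us1(2) us2(2) \<open>us1 = us2\<close> \<open>us1 \<noteq> []\<close> by (metis prefix_Nil)+
      then have t12: "t1 \<noteq> []" "t2 \<noteq> []" by (metis concat.simps(1) list.map(1))+
      have "hd (concat (map \<phi> t1)) = hd (concat (map \<phi> t2))"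
        using prefix_hd[OF us1(2) \<open>us1 \<noteq> []\<close>] prefix_hd[OF us2(2)] \<open>us1 = us2\<close> \<open>us1 \<noteq> []\<close> by simp
      then have "hd (\<phi> (hd t1)) = hd (\<phi> (hd t2))" using ext_hd[OF ne] t12 by simp
      then have "hd t1 = hd t2" using m unfolding mk_def by blast
      then show False using fd t12 by (simp add: first_def)
    qed
  qed
qed

lemma crit:
  assumes m: "mk \<phi>" and nepsi: "\<forall>l. \<psi> l \<noteq> []"
    and e1: "concat (map \<phi> r) = concat (map \<psi> s)"
    and e2: "concat (map \<phi> r') = concat (map \<psi> s')"
    and d: "(r, s) \<noteq> (r', s')" and rne: "r \<noteq> []"
  shows "\<exists>u1 u2 v1 v2. first u1 \<noteq> first u2 \<and> first v1 \<noteq> first v2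
     \<and> concat (map \<phi> (longest_common_prefix r r' @ u1)) = concat (map \<psi> (longest_common_prefix s s' @ v1))
     \<and> concat (map \<phi> (longest_common_prefix r r' @ u2)) = concat (map \<psi> (longest_common_prefix s s' @ v2))"
proof -
  define u where "u = longest_common_prefix r r'"
  define v where "v = longest_common_prefix s s'"
  have rr: "r = u @ drop (length u) r" "r' = u @ drop (length u) r'" unfolding u_def
    using prefix_split longest_common_prefix_prefix1 longest_common_prefix_prefix2 by blast+
  have ss: "s = v @ drop (length v) s" "s' = v @ drop (length v) s'" unfolding v_def
    using prefix_split longest_common_prefix_prefix1 longest_common_prefix_prefix2 by blast+
  show ?thesis
  proof (cases "r = r'")
    case True
    then have sd: "s \<noteq> s'" using d by auto
    have uu: "u = r" unfolding u_def True lcp_self ..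
    define d1 where "d1 = drop (length v) s"
    define d2 where "d2 = drop (length v) s'"
    have fd: "first d1 \<noteq> first d2" using lcp_diff_first[OF sd] unfolding d1_def d2_def v_def .
    have d2ne: "d2 \<noteq> []"
    proof
      assume "d2 = []"
      then have "s = s' @ d1" using ss unfolding d1_def d2_def by simp
      then have "concat (map \<psi> d1) = []" using e1 e2 True by simp
      then have "d1 = []" using ext_empty[OF nepsi] by blast
      then show False using fd \<open>d2 = []\<close> by simp
    qed
    have "first d1 \<noteq> first (d2 @ s')" using fd first_app[OF d2ne] by simp
    moreover have "concat (map \<phi> (u @ [])) = concat (map \<psi> (v @ d1))"
      using e1 uu ss(1) unfolding d1_def by simp
    moreover have "concat (map \<phi> (u @ r)) = concat (map \<psi> (v @ (d2 @ s')))"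
    proof -
      have "concat (map \<psi> (v @ (d2 @ s'))) = concat (map \<psi> s') @ concat (map \<psi> s')"
        using ss(2) unfolding d2_def by (metis append_assoc concat_append map_append)
      then show ?thesis using e2 True uu by simp
    qed
    moreover have "first [] \<noteq> first r" using rne by (simp add: first_def)
    ultimately show ?thesis unfolding u_def v_def by blast
  next
    case False
    have sd: "s \<noteq> s'"
    proof
      assume "s = s'"
      then have "concat (map \<phi> r) = concat (map \<phi> r')" using e1 e2 by simp
      then show False using mk_inj[OF m] False by blast
    qed
    have "first (drop (length u) r) \<noteq> first (drop (length u) r')"
      using lcp_diff_first[OF False] unfolding u_def .
    moreover have "first (drop (length v) s) \<noteq> first (drop (length v) s')"
      using lcp_diff_first[OF sd] unfolding v_def .
    moreover have "concat (map \<phi> (u @ drop (length u) r)) = concat (map \<psi> (v @ drop (length v) s))"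
      using e1 rr(1) ss(1) by simp
    moreover have "concat (map \<phi> (u @ drop (length u) r')) = concat (map \<psi> (v @ drop (length v) s'))"
      using e2 rr(2) ss(2) by simp
    ultimately show ?thesis unfolding u_def v_def by blast
  qed
qed



lemma morph_concat: "(\<forall>l. concat (f l) = g l) \<Longrightarrow> morph g t = concat (concat (map f t))"
  by (induction t) (auto simp: morph_def)

lemma morph_append: "morph g (a @ b) = morph g a @ morph g b" by (simp add: morph_def)

lemma morph_Nil: "morph g [] = []" by (simp add: morph_def)

lemma morph_empty: "\<forall>l. g l \<noteq> [] \<Longrightarrow> morph g t = [] \<Longrightarrow> t = []"
  by (cases t) (auto simp: morph_def)

lemma UNIV_letter: "(UNIV :: letter set) = {La, Lb, Lc}" using letter.exhaust by auto

lemma card_letter: "card (UNIV :: letter set) = 3" by (simp add: UNIV_letter)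

lemma finite_letter: "finite (UNIV :: letter set)" by (simp add: UNIV_letter)

lemma concat_filter_ne: "concat (filter (\<lambda>x. x \<noteq> []) ws) = concat ws"
  by (induction ws) auto

lemma irr_gen_sub: "irr (monoid_gen G) \<subseteq> G"
proof
  fix b assume b: "b \<in> irr (monoid_gen G)"
  then have bM: "b \<in> monoid_gen G" and bne: "b \<noteq> []"
    and nd: "\<not> (\<exists>p q. p \<in> monoid_gen G \<and> q \<in> monoid_gen G \<and> p \<noteq> [] \<and> q \<noteq> [] \<and> b = p @ q)"
    unfolding irr_def by blast+
  obtain ws where ws: "set ws \<subseteq> G" "b = concat ws" using bM unfolding monoid_gen_mem by blast
  define ws' where "ws' = filter (\<lambda>x. x \<noteq> []) ws"
  have c: "concat ws' = b" unfolding ws'_def using ws concat_filter_ne by simp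
  have sG: "set ws' \<subseteq> G" unfolding ws'_def using ws by auto
  have "ws' \<noteq> []" using c bne by auto
  then obtain a rest where ar: "ws' = a # rest" by (cases ws') auto
  have "a \<in> set ws'" using ar by simp
  then have ane: "a \<noteq> []" unfolding ws'_def by simp
  have aG: "a \<in> G" using sG ar by auto
  show "b \<in> G"
  proof (cases "concat rest = []")
    case True
    have bb: "b = a @ concat rest" using c ar by simp
    show ?thesis using bb True aG by (simp only: append_Nil2)
  next
    case False
    have "a \<in> monoid_gen G" using aG gen_in by blast
    moreover have "concat rest \<in> monoid_gen G" using sG ar unfolding monoid_gen_mem by auto
    moreover have "b = a @ concat rest" using c ar by simp
    ultimately show ?thesis using nd ane False by blast
  qed
qed

lemma card_FB_contra:
  assumes Z: "Z = X \<union> U" and X3: "card X = 3" and U3: "card U = 3" and XU: "X \<noteq> U"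
    and Xmax: "k_maximal 3 (monoid_gen X)" and Umax: "k_maximal 3 (monoid_gen U)"
    and cB: "card (FB Z) = 3"
  shows False
proof -
  have finB: "finite (FB Z)" using cB card.infinite by force
  have rk: "rank_le (free_hull Z) 3" unfolding rank_le_def using finB cB FB_gen[of Z] by (intro exI[of _ "FB Z"]) auto
  have "monoid_gen X \<subseteq> free_hull Z"
    by (rule monoid_gen_least[OF hull_submonoid]) (use hull_sup Z in blast)
  then have HX: "free_hull Z = monoid_gen X" using Xmax rk hull_submonoid unfolding k_maximal_def by blast
  have "monoid_gen U \<subseteq> free_hull Z"
    by (rule monoid_gen_least[OF hull_submonoid]) (use hull_sup Z in blast)
  then have HU: "free_hull Z = monoid_gen U" using Umax rk hull_submonoid unfolding k_maximal_def by blast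
  have finX: "finite X" using X3 card.infinite by force
  have finU: "finite U" using U3 card.infinite by force
  have "FB Z = irr (monoid_gen X)" by (simp add: FB_irr HX)
  then have "FB Z \<subseteq> X" using irr_gen_sub[of X] by simp
  then have BX: "FB Z = X" using card_subset_eq[OF finX] X3 cB by simp
  have "FB Z = irr (monoid_gen U)" by (simp add: FB_irr HU)
  then have "FB Z \<subseteq> U" using irr_gen_sub[of U] by simp
  then have BU: "FB Z = U" using card_subset_eq[OF finU] U3 cB by simp
  show False using BX BU XU by simp
qed

lemma sol_eq:
  assumes hne: "\<forall>l. h l \<noteq> []" and gne: "\<forall>l. g l \<noteq> []"
    and m: "minimal_sol g h r s" and pu: "prefix uu r" and pv: "prefix vv s"
    and e: "morph g uu = morph h vv" and une: "uu \<noteq> []" and vne: "vv \<noteq> []"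
  shows "uu = r \<and> vv = s"
proof -
  have rs: "morph g r = morph h s" using m unfolding minimal_sol_def C_sol_def by auto
  have "(uu, vv) \<in> C_sol g h" unfolding C_sol_def using e une vne by auto
  then have "\<not> (strict_prefix uu r \<and> strict_prefix vv s)" using m unfolding minimal_sol_def by blast
  then have "uu = r \<or> vv = s" using pu pv by (auto simp: strict_prefix_def)
  then show ?thesis
  proof
    assume "uu = r"
    obtain d where d: "s = vv @ d" using pv by (auto simp: prefix_def)
    have "morph h d = []" using rs e d \<open>uu = r\<close> by (simp add: morph_append)
    then have "d = []" using morph_empty[OF hne] by blast
    then show ?thesis using d \<open>uu = r\<close> by simp
  next
    assume "vv = s"
    obtain d where d: "r = uu @ d" using pu by (auto simp: prefix_def)
    have "morph g d = []" using rs e d \<open>vv = s\<close> by (simp add: morph_append)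
    then have "d = []" using morph_empty[OF gne] by blast
    then show ?thesis using d \<open>vv = s\<close> by simp
  qed
qed

lemma lcp_Nil_hd: "longest_common_prefix r r' = [] \<Longrightarrow> r \<noteq> [] \<Longrightarrow> r' \<noteq> [] \<Longrightarrow> hd r \<noteq> hd r'"
  by (cases r; cases r') (auto split: if_splits)



lemma main_gen:
  fixes g h :: "letter \<Rightarrow> 'a list"
  assumes Z: "Z = range g \<union> range h" and nZ: "[] \<notin> Z"
    and gm: "Z_marked Z g"
    and cB: "card (FB Z) = 3 \<Longrightarrow> False"
    and min1: "minimal_sol g h r s" and min2: "minimal_sol g h r' s'"
    and dist: "(r, s) \<noteq> (r', s')"
  shows "\<exists>ov. morph g (longest_common_prefix r r') = morph h (longest_common_prefix s s') @ ov
          \<and> critical_overflow g h (longest_common_prefix r r') (longest_common_prefix s s') ov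
          \<and> (Z_marked Z h \<longleftrightarrow> ov = [])"
proof -
  have gZ: "g l \<in> Z" "h l \<in> Z" for l using Z by auto
  have gH: "g l \<in> free_hull Z" "h l \<in> free_hull Z" for l using gZ hull_sup by blast+
  have gne: "\<forall>l. g l \<noteq> []" "\<forall>l. h l \<noteq> []" using gZ nZ by metis+
  have "\<forall>l. \<exists>ws. set ws \<subseteq> FB Z \<and> concat ws = g l" using hull_fact gH by blast
  from choice[OF this] obtain gf where gf: "\<forall>l. set (gf l) \<subseteq> FB Z \<and> concat (gf l) = g l" by blast
  have "\<forall>l. \<exists>ws. set ws \<subseteq> FB Z \<and> concat ws = h l" using hull_fact gH by blast
  from choice[OF this] obtain hf where hf: "\<forall>l. set (hf l) \<subseteq> FB Z \<and> concat (hf l) = h l" by blast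
  have gfne: "\<forall>l. gf l \<noteq> []"
  proof
    fix l show "gf l \<noteq> []" using gf gne(1) by (metis concat.simps(1))
  qed
  have hfne: "\<forall>l. hf l \<noteq> []"
  proof
    fix l show "hf l \<noteq> []" using hf gne(2) by (metis concat.simps(1))
  qed
  have gfirst: "first_Z Z (g l) = hd (gf l)" for l using first_Z_concat[of "gf l" Z] gf gfne by simp
  have hfirst: "first_Z Z (h l) = hd (hf l)" for l using first_Z_concat[of "hf l" Z] hf hfne by simp
  have mg: "mk gf" unfolding mk_def using gfne gm gfirst unfolding Z_marked_def by simp
  have mor_g: "morph g t = concat (concat (map gf t))" for t using morph_concat[of gf g] gf by blast
  have mor_h: "morph h t = concat (concat (map hf t))" for t using morph_concat[of hf h] hf by blast
  have setg: "set (concat (map gf t)) \<subseteq> FB Z" for t using gf by auto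
  have seth: "set (concat (map hf t)) \<subseteq> FB Z" for t using hf by auto
  have eqlift: "concat (map gf t) = concat (map hf p)" if "morph g t = morph h p" for t p
    by (rule code_unique[OF FB_code, of _ Z]) (use setg seth mor_g mor_h that in auto)
  have r1: "r \<noteq> []" "s \<noteq> []" "morph g r = morph h s" using min1 unfolding minimal_sol_def C_sol_def by auto
  have r2: "r' \<noteq> []" "s' \<noteq> []" "morph g r' = morph h s'" using min2 unfolding minimal_sol_def C_sol_def by auto
  have e1: "concat (map gf r) = concat (map hf s)" using eqlift r1 by blast
  have e2: "concat (map gf r') = concat (map hf s')" using eqlift r2 by blast
  define uu where "uu = longest_common_prefix r r'"
  define vv where "vv = longest_common_prefix s s'"
  have pre: "prefix (concat (map hf vv)) (concat (map gf uu))"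
    using bound[OF mg e1 e2] unfolding uu_def vv_def .
  obtain Ov where Ov: "concat (map gf uu) = concat (map hf vv) @ Ov" using pre by (auto simp: prefix_def)
  define ov where "ov = concat Ov"
  have eqov: "morph g uu = morph h vv @ ov" using Ov unfolding mor_g mor_h ov_def by simp
  have co: "critical_overflow g h uu vv ov"
  proof -
    obtain u1 u2 v1 v2 where c: "first u1 \<noteq> first u2" "first v1 \<noteq> first v2"
      "concat (map gf (uu @ u1)) = concat (map hf (vv @ v1))"
      "concat (map gf (uu @ u2)) = concat (map hf (vv @ v2))"
      using crit[OF mg hfne e1 e2 dist r1(1)] unfolding uu_def vv_def by blast
    have "morph g (uu @ u1) = morph h (vv @ v1)" "morph g (uu @ u2) = morph h (vv @ v2)"
      unfolding mor_g mor_h using c by simp_all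
    then show ?thesis unfolding critical_overflow_def using eqov c by blast
  qed
  have iff: "Z_marked Z h \<longleftrightarrow> ov = []"
  proof
    assume hm: "Z_marked Z h"
    have mh: "mk hf" unfolding mk_def using hfne hm hfirst unfolding Z_marked_def by simp
    have "prefix (concat (map gf uu)) (concat (map hf vv))"
      using bound[OF mh e1[symmetric] e2[symmetric]] unfolding uu_def vv_def .
    then have "Ov = []" using Ov by (auto simp: prefix_def)
    then show "ov = []" unfolding ov_def by simp
  next
    assume ov0: "ov = []"
    then have e: "morph g uu = morph h vv" using eqov by simp
    have pr: "prefix uu r" "prefix uu r'" "prefix vv s" "prefix vv s'" unfolding uu_def vv_def
      using longest_common_prefix_prefix1 longest_common_prefix_prefix2 by blast+
    have u0: "uu = []"
    proof (rule ccontr)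
      assume une: "uu \<noteq> []"
      then have "morph g uu \<noteq> []" using morph_empty[OF gne(1)] by blast
      then have vne: "vv \<noteq> []" using e by (auto simp: morph_Nil)
      have "uu = r \<and> vv = s" using sol_eq[OF gne(2) gne(1) min1 pr(1) pr(3) e une vne] .
      moreover have "uu = r' \<and> vv = s'" using sol_eq[OF gne(2) gne(1) min2 pr(2) pr(4) e une vne] .
      ultimately show False using dist by simp
    qed
    then have "morph h vv = []" using e by (simp add: morph_Nil)
    then have v0: "vv = []" using morph_empty[OF gne(2)] by blast
    have hr: "hd r \<noteq> hd r'" using lcp_Nil_hd[of r r'] u0 r1 r2 unfolding uu_def by blast
    have hs: "hd s \<noteq> hd s'" using lcp_Nil_hd[of s s'] v0 r1 r2 unfolding vv_def by blast
    have a1: "hd (gf (hd r)) = hd (hf (hd s))" using e1 ext_hd[OF gfne r1(1)] ext_hd[OF hfne r1(2)] by simp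
    have a2: "hd (gf (hd r')) = hd (hf (hd s'))" using e2 ext_hd[OF gfne r2(1)] ext_hd[OF hfne r2(2)] by simp
    have a12: "hd (gf (hd r)) \<noteq> hd (gf (hd r'))" using mg hr unfolding mk_def by blast
    define Sg where "Sg = range (\<lambda>l. hd (gf l))"
    define Sh where "Sh = range (\<lambda>l. hd (hf l))"
    have injg: "inj (\<lambda>l. hd (gf l))" using mg unfolding mk_def inj_def by blast
    have cSg: "card Sg = 3" unfolding Sg_def using inj_on_iff_eq_card[OF finite_letter, of "\<lambda>l. hd (gf l)"] injg card_letter by simp
    have finSh: "finite Sh" unfolding Sh_def using finite_letter by simp
    show "Z_marked Z h"
    proof (rule ccontr)
      assume nm: "\<not> Z_marked Z h"
      then obtain l1 l2 where "l1 \<noteq> l2" "first_Z Z (h l1) = first_Z Z (h l2)"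
        unfolding Z_marked_def using gH by blast
      then have "\<not> inj (\<lambda>l. hd (hf l))" using hfirst unfolding inj_def by auto
      then have "card Sh \<noteq> 3" unfolding Sh_def using inj_on_iff_eq_card[OF finite_letter, of "\<lambda>l. hd (hf l)"] card_letter by simp
      moreover have "card Sh \<le> 3" unfolding Sh_def using card_image_le[OF finite_letter] card_letter by metis
      ultimately have cSh: "card Sh \<le> 2" by simp
      have sub: "{hd (hf (hd s)), hd (hf (hd s'))} \<subseteq> Sh" unfolding Sh_def by auto
      have c2: "card {hd (hf (hd s)), hd (hf (hd s'))} = 2" using a1 a2 a12 by simp
      have "{hd (hf (hd s)), hd (hf (hd s'))} = Sh" using card_subset_eq[OF finSh sub] c2 cSh card_mono[OF finSh sub] by simp
      moreover have "{hd (hf (hd s)), hd (hf (hd s'))} \<subseteq> Sg" unfolding Sg_def using a1 a2 by (metis rangeI insert_subset empty_subsetI)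
      ultimately have ShSg: "Sh \<subseteq> Sg" by simp
      have "FB Z \<subseteq> first_Z Z ` Z" using FB_first_surj[OF nZ] by blast
      also have "first_Z Z ` Z = Sg \<union> Sh"
      proof -
        have A: "first_Z Z ` (range g \<union> range h) = Sg \<union> Sh"
          unfolding Sg_def Sh_def by (simp add: image_Un image_image gfirst hfirst)
        show ?thesis using A unfolding Z[symmetric] .
      qed
      finally have "FB Z \<subseteq> Sg" using ShSg by blast
      moreover have "Sg \<subseteq> FB Z" unfolding Sg_def using gf gfne by (auto intro: hd_in_set)
      ultimately have "FB Z = Sg" by blast
      then show False using cB cSg by simp
    qed
  qed
  show ?thesis using eqov co iff unfolding uu_def vv_def by blast
qed

theorem proposition4p5:
  fixes x y z u v w :: "'a::countable list"
    and r s r' s' :: "letter list"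
  assumes X3: "card {x, y, z} = 3" and U3: "card {u, v, w} = 3"
    and nonempty: "[] \<notin> {x, y, z, u, v, w}"
    and XU: "{x, y, z} \<noteq> {u, v, w}"
    and Xmax: "k_maximal 3 (monoid_gen {x, y, z})"
    and Umax: "k_maximal 3 (monoid_gen {u, v, w})"
    and gmarked: "Z_marked ({x, y, z} \<union> {u, v, w})
                    (\<lambda>l. case l of La \<Rightarrow> x | Lb \<Rightarrow> y | Lc \<Rightarrow> z)"
    and min1: "minimal_sol (\<lambda>l. case l of La \<Rightarrow> x | Lb \<Rightarrow> y | Lc \<Rightarrow> z)
                           (\<lambda>l. case l of La \<Rightarrow> u | Lb \<Rightarrow> v | Lc \<Rightarrow> w) r s"
    and min2: "minimal_sol (\<lambda>l. case l of La \<Rightarrow> x | Lb \<Rightarrow> y | Lc \<Rightarrow> z)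
                           (\<lambda>l. case l of La \<Rightarrow> u | Lb \<Rightarrow> v | Lc \<Rightarrow> w) r' s'"
    and distinct: "(r, s) \<noteq> (r', s')"
  shows "\<exists>ov. morph (\<lambda>l. case l of La \<Rightarrow> x | Lb \<Rightarrow> y | Lc \<Rightarrow> z)
                   (longest_common_prefix r r')
             = morph (\<lambda>l. case l of La \<Rightarrow> u | Lb \<Rightarrow> v | Lc \<Rightarrow> w)
                   (longest_common_prefix s s') @ ov
          \<and> critical_overflow (\<lambda>l. case l of La \<Rightarrow> x | Lb \<Rightarrow> y | Lc \<Rightarrow> z)
                (\<lambda>l. case l of La \<Rightarrow> u | Lb \<Rightarrow> v | Lc \<Rightarrow> w)
                (longest_common_prefix r r') (longest_common_prefix s s') ov
          \<and> (Z_marked ({x, y, z} \<union> {u, v, w})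
                (\<lambda>l. case l of La \<Rightarrow> u | Lb \<Rightarrow> v | Lc \<Rightarrow> w) \<longleftrightarrow> ov = [])"
  proof -
  let ?g = "\<lambda>l. case l of La \<Rightarrow> x | Lb \<Rightarrow> y | Lc \<Rightarrow> z"
  let ?h = "\<lambda>l. case l of La \<Rightarrow> u | Lb \<Rightarrow> v | Lc \<Rightarrow> w"
  have rg: "range ?g = {x, y, z}" by (simp add: UNIV_letter)
  have rh: "range ?h = {u, v, w}" by (simp add: UNIV_letter)
  have Z: "{x, y, z} \<union> {u, v, w} = range ?g \<union> range ?h" using rg rh by simp
  have nZ: "[] \<notin> {x, y, z} \<union> {u, v, w}" using nonempty by simp
  have cB: "card (FB ({x, y, z} \<union> {u, v, w})) = 3 \<Longrightarrow> False"
    using card_FB_contra[OF refl X3 U3 XU Xmax Umax] by blast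
  show ?thesis using main_gen[OF Z nZ gmarked cB min1 min2 distinct] .
qed

end
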